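(* Let $F_n$ be the free group on $f_1,\dots,f_n$, $g=f_1\cdots f_n$, $R$ the set of conjugates of $f_1,\dots,f_n$. For every $\tau\in B_n$, the automorphism $a\mapsto\tau\star a$ of $F_n$ restricts to a poset isomorphism $([1,g]_R,\le_R)\to([1,g]_R,\le_R)$.
   Context: For a group $G$ with generating set $X$: $\ell_X(a)$ is the minimal $k$ with $a=x_1\cdots x_k$, $x_i\in X\cup X^{-1}$; $a\le_X b$ iff $\ell_X(a)+\ell_X(a^{-1}b)=\ell_X(b)$; $[1,b]_X=\{a:a\le_Xb\}$. The braid group $B_n=\langle\sigma_1,\dots,\sigma_{n-1}\rangle$ acts on $F_n$ by automorphisms (denoted $\tau\star a$), where $\sigma_i$ acts by $\sigma_i\star f_i=f_{i+1}$, $\sigma_i\star f_{i+1}=f_{i+1}^{-1}f_if_{i+1}$, and $\sigma_i\star f_j=f_j$ for $j\notin\{i,i+1\}$; equivalently this is the action of $B_n$, viewed as the mapping class group of the $n$-punctured disk relative to its boundary, on its fundamental group $F_n$. *)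

theory Defs
  imports Main
begin

text \<open>A letter (i, False) stands for f_i, a letter (i, True) for f_i inverse.
  Elements of F_n are freely reduced words all of whose letters have index in {1..n}.\<close>

type_synonym letter = "nat \<times> bool"

fun red_cons :: "letter \<Rightarrow> letter list \<Rightarrow> letter list" where
  "red_cons x [] = [x]"
| "red_cons x (y # ys) = (if fst x = fst y \<and> snd x \<noteq> snd y then ys else x # y # ys)"

definition reduce :: "letter list \<Rightarrow> letter list" where
  "reduce xs = foldr red_cons xs []"

fun reduced :: "letter list \<Rightarrow> bool" where
  "reduced [] = True"
| "reduced [x] = True"
| "reduced (x # y # ys) = (\<not> (fst x = fst y \<and> snd x \<noteq> snd y) \<and> reduced (y # ys))"

definition FG :: "nat \<Rightarrow> letter list set" where
  "FG n = {w. reduced w \<and> (\<forall>l \<in> set w. fst l \<in> {1..n})}"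

definition fmul :: "letter list \<Rightarrow> letter list \<Rightarrow> letter list" where
  "fmul x y = reduce (x @ y)"

definition finv :: "letter list \<Rightarrow> letter list" where
  "finv x = rev (map (\<lambda>(i, b). (i, \<not> b)) x)"

definition gen :: "nat \<Rightarrow> letter list" where
  "gen i = [(i, False)]"

definition fprod :: "letter list list \<Rightarrow> letter list" where
  "fprod xs = foldr fmul xs []"

definition gelt :: "nat \<Rightarrow> letter list" where
  "gelt n = fprod (map gen [1..<n+1])"

definition Rset :: "nat \<Rightarrow> letter list set" where
  "Rset n = {fmul (fmul w (gen i)) (finv w) | w i. w \<in> FG n \<and> i \<in> {1..n}}"

definition lenR :: "nat \<Rightarrow> letter list \<Rightarrow> nat" where
  "lenR n a = (LEAST k. \<exists>xs. length xs = k \<and> set xs \<subseteq> Rset n \<union> finv ` Rset n \<and> fprod xs = a)"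

definition leR :: "nat \<Rightarrow> letter list \<Rightarrow> letter list \<Rightarrow> bool" where
  "leR n a b \<longleftrightarrow> lenR n a + lenR n (fmul (finv a) b) = lenR n b"

definition intervalR :: "nat \<Rightarrow> letter list \<Rightarrow> letter list set" where
  "intervalR n b = {a \<in> FG n. leR n a b}"

definition hom_ext :: "(nat \<Rightarrow> letter list) \<Rightarrow> letter list \<Rightarrow> letter list" where
  "hom_ext \<phi> w = foldr (\<lambda>(i, b) acc. fmul (if b then finv (\<phi> i) else \<phi> i) acc) w []"

text \<open>Images of the generators under sigma_i (e = False) and its inverse (e = True).\<close>
definition sig_img :: "nat \<Rightarrow> bool \<Rightarrow> nat \<Rightarrow> letter list" where
  "sig_img i e j =
     (if \<not> e then
        (if j = i then gen (i+1)
         else if j = i+1 then [(i+1, True), (i, False), (i+1, False)]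
         else gen j)
      else
        (if j = i+1 then gen i
         else if j = i then [(i, False), (i+1, False), (i, True)]
         else gen j))"

text \<open>A braid is given by a word in sigma_i^{+-1} (letter (i, False) = sigma_i,
  (i, True) = sigma_i inverse), with 1 <= i <= n-1; the action is the left action
  sigma_{i_1}^{e_1} ... sigma_{i_k}^{e_k} * a = s_1 * (s_2 * ( ... (s_k * a))).\<close>
definition braid_words :: "nat \<Rightarrow> (nat \<times> bool) list set" where
  "braid_words n = {\<tau>. \<forall>l \<in> set \<tau>. fst l \<in> {1..<n}}"

definition braid_act :: "(nat \<times> bool) list \<Rightarrow> letter list \<Rightarrow> letter list" where
  "braid_act \<tau> a = foldr (\<lambda>(i, e) x. hom_ext (sig_img i e) x) \<tau> a"

end

theory Submission
  imports Defs
begin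

definition linv :: "letter \<Rightarrow> letter" where "linv l = (fst l, \<not> snd l)"

lemma linv_linv[simp]: "linv (linv x) = x" by (simp add: linv_def)
lemma fst_linv[simp]: "fst (linv x) = fst x" by (simp add: linv_def)

lemma cancel_iff: "(fst x = fst y \<and> snd x \<noteq> snd y) = (y = linv x)"
  by (auto simp: linv_def prod_eq_iff)

lemma finv_alt: "finv x = rev (map linv x)"
  unfolding finv_def by (induction x) (auto simp: linv_def)

lemma red_cons_simp: "red_cons x (y # ys) = (if y = linv x then ys else x # y # ys)"
  unfolding red_cons.simps(2) cancel_iff by simp

lemma reduced_simp: "reduced (x # y # ys) = (y \<noteq> linv x \<and> reduced (y # ys))"
  unfolding reduced.simps(3) cancel_iff by simp

declare red_cons.simps(2)[simp del] reduced.simps(3)[simp del]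
declare red_cons_simp[simp] reduced_simp[simp]

lemma reduced_tl: "reduced (x # ys) \<Longrightarrow> reduced ys"
  by (cases ys) auto

lemma reduced_red_cons: "reduced ys \<Longrightarrow> reduced (red_cons x ys)"
  by (cases ys) (auto dest: reduced_tl)

lemma reduce_Nil[simp]: "reduce [] = []" by (simp add: reduce_def)
lemma reduce_Cons: "reduce (x # xs) = red_cons x (reduce xs)" by (simp add: reduce_def)

lemma reduced_reduce[simp]: "reduced (reduce xs)"
  by (induction xs) (auto simp: reduce_Cons intro: reduced_red_cons)

lemma reduced_foldr: "reduced acc \<Longrightarrow> reduced (foldr red_cons xs acc)"
  by (induction xs) (auto intro: reduced_red_cons)

lemma reduce_reduced: "reduced xs \<Longrightarrow> reduce xs = xs"
proof (induction xs)
  case Nil then show ?case by simp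
next
  case (Cons x xs)
  then have "reduce xs = xs" using reduced_tl by blast
  then show ?case using Cons.prems by (cases xs) (auto simp: reduce_Cons)
qed

lemma reduce_reduce[simp]: "reduce (reduce xs) = reduce xs"
  by (simp add: reduce_reduced)

lemma red_cons_cancel: "reduced s \<Longrightarrow> red_cons (linv y) (red_cons y s) = s"
proof (cases s)
  case Nil then show ?thesis by simp
next
  case (Cons z s')
  assume r: "reduced s"
  show ?thesis
  proof (cases "z = linv y")
    case True
    then show ?thesis using r Cons by (cases s') auto
  next
    case False
    then show ?thesis using Cons by auto
  qed
qed

lemma red_cons_cancel': "reduced s \<Longrightarrow> red_cons y (red_cons (linv y) s) = s"
  using red_cons_cancel[of s "linv y"] by simp

lemma foldr_reduce: "reduced acc \<Longrightarrow> foldr red_cons xs acc = foldr red_cons (reduce xs) acc"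
proof (induction xs)
  case Nil then show ?case by simp
next
  case (Cons x xs)
  have key: "red_cons x (foldr red_cons r acc) = foldr red_cons (red_cons x r) acc" for r
  proof (cases r)
    case Nil then show ?thesis by simp
  next
    case (Cons y r')
    show ?thesis
    proof (cases "y = linv x")
      case True
      then show ?thesis using Cons red_cons_cancel'[OF reduced_foldr[OF \<open>reduced acc\<close>, of r'], of x]
        by simp
    next
      case False then show ?thesis using Cons by simp
    qed
  qed
  show ?case using Cons by (simp add: reduce_Cons key)
qed

lemma reduce_append_right: "reduce (xs @ reduce ys) = reduce (xs @ ys)"
  by (metis foldr_append reduce_def reduce_reduce)

lemma reduce_append_left: "reduce (reduce xs @ ys) = reduce (xs @ ys)"
proof -
  have "reduce (reduce xs @ ys) = foldr red_cons (reduce xs) (reduce ys)"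
    by (simp add: reduce_def)
  also have "\<dots> = foldr red_cons xs (reduce ys)"
    using foldr_reduce[of "reduce ys" xs] by simp
  also have "\<dots> = reduce (xs @ ys)" by (simp add: reduce_def)
  finally show ?thesis .
qed

lemma reduce_append_mid: "reduce (xs @ reduce ys @ zs) = reduce (xs @ ys @ zs)"
  by (metis append_assoc reduce_append_left reduce_append_right)

lemma finv_Nil[simp]: "finv [] = []" by (simp add: finv_def)
lemma finv_Cons: "finv (x # xs) = finv xs @ [linv x]" by (simp add: finv_alt)
lemma finv_append: "finv (xs @ ys) = finv ys @ finv xs" by (simp add: finv_alt)
lemma finv_finv[simp]: "finv (finv xs) = xs" by (simp add: finv_alt rev_map comp_def)
lemma set_finv: "fst ` set (finv xs) = fst ` set xs" by (simp add: finv_alt image_image)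

lemma reduce_finv_cancel[simp]: "reduce (finv x @ x) = []"
proof (induction x)
  case Nil then show ?case by simp
next
  case (Cons y x)
  have "reduce (finv (y # x) @ y # x) = foldr red_cons (finv x) (red_cons (linv y) (red_cons y (reduce x)))"
    by (simp add: finv_Cons reduce_def)
  also have "\<dots> = foldr red_cons (finv x) (reduce x)" by (simp add: red_cons_cancel)
  also have "\<dots> = reduce (finv x @ x)" by (simp add: reduce_def)
  finally show ?case using Cons by simp
qed

lemma reduce_cancel_finv[simp]: "reduce (x @ finv x) = []"
  using reduce_finv_cancel[of "finv x"] by simp

lemma reduced_iff: "reduced w \<longleftrightarrow> (\<forall>as x bs. w \<noteq> as @ x # linv x # bs)"
proof (induction w rule: reduced.induct)
  case 1 then show ?case by simp
next
  case (2 x) then show ?case by (simp add: Cons_eq_append_conv)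
next
  case (3 x y ys)
  show ?case
  proof
    assume r: "reduced (x # y # ys)"
    show "\<forall>as z bs. x # y # ys \<noteq> as @ z # linv z # bs"
    proof (intro allI notI)
      fix as z bs assume e: "x # y # ys = as @ z # linv z # bs"
      show False
      proof (cases as)
        case Nil then show False using e r by simp
      next
        case (Cons a as')
        then have e': "y # ys = as' @ z # linv z # bs" using e by simp
        have "reduced (y # ys)" using r by simp
        then show False using 3 e' by blast
      qed
    qed
  next
    assume h: "\<forall>as z bs. x # y # ys \<noteq> as @ z # linv z # bs"
    have "y \<noteq> linv x" using h[rule_format, of "[]" x ys] by auto
    moreover have "\<forall>as z bs. y # ys \<noteq> as @ z # linv z # bs"
    proof (intro allI notI)
      fix as z bs assume "y # ys = as @ z # linv z # bs"
      then show False using h[rule_format, of "x # as" z bs] by simp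
    qed
    ultimately show "reduced (x # y # ys)" using 3 by simp
  qed
qed

lemma reduced_finv: "reduced w \<Longrightarrow> reduced (finv w)"
proof -
  assume r: "reduced w"
  show ?thesis unfolding reduced_iff
  proof (intro allI notI)
    fix as x bs assume "finv w = as @ x # linv x # bs"
    then have "finv (finv w) = finv bs @ [x, linv x] @ finv as"
      by (simp add: finv_append finv_Cons)
    then have "w = finv bs @ x # linv x # finv as" by simp
    then show False using r unfolding reduced_iff by blast
  qed
qed

lemma reduce_finv: "reduce (finv w) = finv (reduce w)"
proof -
  have u: "u = finv v" if "reduced u" "reduced v" "reduce (u @ v) = []" for u v
  proof -
    have c: "reduce (v @ finv v) = []" by (rule reduce_cancel_finv)
    have "u = reduce (u @ reduce (v @ finv v))" using that by (simp only: c append_Nil2 reduce_reduced)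
    also have "\<dots> = reduce (reduce (u @ v) @ finv v)"
      by (simp only: reduce_append_right reduce_append_left append_assoc)
    also have "\<dots> = finv v" using that by (simp add: reduce_reduced reduced_finv)
    finally show ?thesis .
  qed
  show ?thesis
    by (rule u) (simp_all add: reduce_append_left reduce_append_right)
qed

lemma set_reduce: "set (reduce w) \<subseteq> set w"
proof (induction w)
  case Nil then show ?case by simp
next
  case (Cons x w)
  then show ?case by (cases "reduce w") (auto simp: reduce_Cons)
qed


lemma inv_unique: "reduced u \<Longrightarrow> reduced v \<Longrightarrow> reduce (u @ v) = [] \<Longrightarrow> u = finv v"
proof -
  assume that: "reduced u" "reduced v" "reduce (u @ v) = []"
  have c: "reduce (v @ finv v) = []" by (rule reduce_cancel_finv)
  have "u = reduce (u @ reduce (v @ finv v))" using that by (simp only: c append_Nil2 reduce_reduced)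
  also have "\<dots> = reduce (reduce (u @ v) @ finv v)"
    by (simp only: reduce_append_right reduce_append_left append_assoc)
  also have "\<dots> = finv v" using that by (simp add: reduce_reduced reduced_finv)
  finally show ?thesis .
qed

lemma fmul_assoc: "fmul (fmul x y) z = fmul x (fmul y z)"
  by (simp add: fmul_def reduce_append_left reduce_append_right)

lemma reduced_fmul[simp]: "reduced (fmul x y)" by (simp add: fmul_def)

lemma finv_fmul: "finv (fmul x y) = fmul (finv y) (finv x)"
  by (simp add: fmul_def reduce_finv[symmetric] finv_append)

lemma fmul_Nil_left: "fmul [] x = reduce x" by (simp add: fmul_def)
lemma fmul_Nil_right: "fmul x [] = reduce x" by (simp add: fmul_def)

lemma fprod_eq: "fprod xs = reduce (concat xs)"
  by (induction xs) (simp_all add: fprod_def fmul_def reduce_append_right)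

definition phi' :: "(nat \<Rightarrow> letter list) \<Rightarrow> letter \<Rightarrow> letter list" where
  "phi' \<phi> l = (if snd l then finv (\<phi> (fst l)) else \<phi> (fst l))"

lemma hom_ext_Cons: "hom_ext \<phi> (x # w) = fmul (phi' \<phi> x) (hom_ext \<phi> w)"
  by (cases x) (simp add: hom_ext_def phi'_def)

lemma hom_ext_Nil[simp]: "hom_ext \<phi> [] = []" by (simp add: hom_ext_def)

lemma hom_ext_eq: "hom_ext \<phi> w = reduce (concat (map (phi' \<phi>) w))"
  by (induction w) (simp_all add: hom_ext_Cons fmul_def reduce_append_right)

lemma phi'_linv: "phi' \<phi> (linv x) = finv (phi' \<phi> x)"
  by (simp add: phi'_def linv_def)

lemma reduced_hom[simp]: "reduced (hom_ext \<phi> w)" by (simp add: hom_ext_eq)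

lemma hom_red_cons: "reduce (concat (map (phi' \<phi>) (red_cons x r))) = reduce (phi' \<phi> x @ concat (map (phi' \<phi>) r))"
proof (cases r)
  case Nil then show ?thesis by simp
next
  case (Cons y r')
  show ?thesis
  proof (cases "y = linv x")
    case True
    have "reduce (phi' \<phi> x @ concat (map (phi' \<phi>) r)) =
          reduce (reduce (phi' \<phi> x @ finv (phi' \<phi> x)) @ concat (map (phi' \<phi>) r'))"
      using Cons True by (simp only: reduce_append_left phi'_linv list.map concat.simps append_assoc)
    also have "\<dots> = reduce (concat (map (phi' \<phi>) r'))" by simp
    finally show ?thesis using Cons True by simp
  next
    case False then show ?thesis using Cons by simp
  qed
qed

lemma hom_ext_reduce: "hom_ext \<phi> (reduce w) = hom_ext \<phi> w"
proof (induction w)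
  case Nil then show ?case by simp
next
  case (Cons x w)
  have "hom_ext \<phi> (reduce (x # w)) = reduce (phi' \<phi> x @ concat (map (phi' \<phi>) (reduce w)))"
    by (simp add: hom_ext_eq reduce_Cons hom_red_cons)
  also have "\<dots> = reduce (phi' \<phi> x @ hom_ext \<phi> (reduce w))"
    by (simp add: hom_ext_eq reduce_append_right)
  also have "\<dots> = reduce (phi' \<phi> x @ hom_ext \<phi> w)" using Cons by simp
  also have "\<dots> = hom_ext \<phi> (x # w)" by (simp add: hom_ext_eq reduce_append_right)
  finally show ?case .
qed

lemma hom_fmul: "hom_ext \<phi> (fmul x y) = fmul (hom_ext \<phi> x) (hom_ext \<phi> y)"
  by (simp add: fmul_def hom_ext_reduce) (simp add: hom_ext_eq reduce_append_left reduce_append_right)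

lemma hom_finv: "hom_ext \<phi> (finv x) = finv (hom_ext \<phi> x)"
proof (rule inv_unique)
  have e: "fmul (finv x) x = []" unfolding fmul_def by (rule reduce_finv_cancel)
  have "reduce (hom_ext \<phi> (finv x) @ hom_ext \<phi> x) = fmul (hom_ext \<phi> (finv x)) (hom_ext \<phi> x)"
    by (simp only: fmul_def)
  also have "\<dots> = hom_ext \<phi> (fmul (finv x) x)" by (simp only: hom_fmul)
  also have "\<dots> = []" by (simp only: e hom_ext_Nil)
  finally show "reduce (hom_ext \<phi> (finv x) @ hom_ext \<phi> x) = []" .
qed simp_all

lemma hom_cong: "(\<And>j. j \<in> fst ` set w \<Longrightarrow> \<phi> j = \<psi> j) \<Longrightarrow> hom_ext \<phi> w = hom_ext \<psi> w"
  by (induction w) (auto simp: hom_ext_Cons phi'_def)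

lemma hom_comp: "hom_ext \<psi> (hom_ext \<phi> w) = hom_ext (\<lambda>j. hom_ext \<psi> (\<phi> j)) w"
proof (induction w)
  case Nil then show ?case by simp
next
  case (Cons x w)
  have "hom_ext \<psi> (phi' \<phi> x) = phi' (\<lambda>j. hom_ext \<psi> (\<phi> j)) x"
    by (simp add: phi'_def hom_finv)
  then show ?case using Cons by (simp add: hom_ext_Cons hom_fmul)
qed

lemma hom_gen: "hom_ext gen w = reduce w"
proof -
  have "phi' gen x = [x]" for x by (cases x) (auto simp: phi'_def gen_def finv_alt linv_def)
  then have "concat (map (phi' gen) w) = w" by (induction w) auto
  then show ?thesis by (simp add: hom_ext_eq)
qed

lemma hom_range: "l \<in> set (hom_ext \<phi> w) \<Longrightarrow> \<exists>j \<in> fst ` set w. fst l \<in> fst ` set (\<phi> j)"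
proof -
  assume "l \<in> set (hom_ext \<phi> w)"
  then have "l \<in> set (concat (map (phi' \<phi>) w))" using set_reduce unfolding hom_ext_eq by blast
  then obtain x where x: "x \<in> set w" "l \<in> set (phi' \<phi> x)" by auto
  have "fst l \<in> fst ` set (phi' \<phi> x)" using x(2) by blast
  then have "fst l \<in> fst ` set (\<phi> (fst x))"
    by (cases "snd x") (simp_all only: phi'_def set_finv if_True if_False)
  then show ?thesis using x by blast
qed


section \<open>Braid action\<close>

lemma sig_inv: "hom_ext (sig_img i (\<not> e)) (sig_img i e j) = gen j"
  by (cases e) (auto simp: sig_img_def hom_ext_Cons phi'_def gen_def fmul_def finv_alt linv_def reduce_Cons)

lemma sig_inv_fun: "(\<lambda>j. hom_ext (sig_img i (\<not> e)) (sig_img i e j)) = gen"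
  by (rule ext) (rule sig_inv)

lemma ba_Nil[simp]: "braid_act [] a = a" by (simp add: braid_act_def)
lemma ba_Cons: "braid_act (x # t) a = hom_ext (sig_img (fst x) (snd x)) (braid_act t a)"
  by (cases x) (simp add: braid_act_def)
lemma ba_append: "braid_act (s @ t) a = braid_act s (braid_act t a)"
  by (simp add: braid_act_def)

lemma ba_fmul: "braid_act t (fmul x y) = fmul (braid_act t x) (braid_act t y)"
  by (induction t) (simp_all add: ba_Cons hom_fmul)

lemma ba_finv: "braid_act t (finv x) = finv (braid_act t x)"
  by (induction t) (simp_all add: ba_Cons hom_finv)

lemma ba_Nil_word[simp]: "braid_act t [] = []"
  by (induction t) (simp_all add: ba_Cons)

lemma ba_fprod: "braid_act t (fprod xs) = fprod (map (braid_act t) xs)"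
  by (induction xs) (simp_all add: fprod_def ba_fmul)

lemma ba_reduced: "reduced a \<Longrightarrow> reduced (braid_act t a)"
  by (cases t) (simp_all add: ba_Cons)

definition binv :: "(nat \<times> bool) list \<Rightarrow> (nat \<times> bool) list" where
  "binv t = rev (map (\<lambda>x. (fst x, \<not> snd x)) t)"

lemma binv_binv[simp]: "binv (binv t) = t"
  by (simp add: binv_def rev_map comp_def)

lemma binv_words: "t \<in> braid_words n \<Longrightarrow> binv t \<in> braid_words n"
  by (auto simp: binv_def braid_words_def)

lemma ba_inv: "reduced a \<Longrightarrow> braid_act (binv t) (braid_act t a) = a"
proof (induction t)
  case Nil then show ?case by (simp add: binv_def)
next
  case (Cons x t)
  have "braid_act (binv (x # t)) (braid_act (x # t) a)
      = braid_act (binv t) (hom_ext (sig_img (fst x) (\<not> snd x)) (hom_ext (sig_img (fst x) (snd x)) (braid_act t a)))"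
    by (simp add: binv_def ba_append ba_Cons)
  also have "\<dots> = braid_act (binv t) (braid_act t a)"
    using Cons.prems by (simp add: hom_comp sig_inv_fun hom_gen reduce_reduced ba_reduced)
  finally show ?case using Cons by simp
qed

lemma ba_inv': "reduced a \<Longrightarrow> braid_act t (braid_act (binv t) a) = a"
  using ba_inv[of a "binv t"] by simp

lemma fst_sig: "fst ` set (sig_img i e j) \<subseteq> {i, i+1, j}"
  by (auto simp: sig_img_def gen_def)

lemma ba_FG: "t \<in> braid_words n \<Longrightarrow> a \<in> FG n \<Longrightarrow> braid_act t a \<in> FG n"
proof (induction t)
  case Nil then show ?case by simp
next
  case (Cons x t)
  then have b: "braid_act t a \<in> FG n" and x: "fst x \<in> {1..<n}" by (auto simp: braid_words_def)
  show ?case unfolding FG_def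
  proof (simp add: ba_Cons, intro ballI)
    fix l assume "l \<in> set (hom_ext (sig_img (fst x) (snd x)) (braid_act t a))"
    from hom_range[OF this] obtain j where j: "j \<in> fst ` set (braid_act t a)"
      "fst l \<in> fst ` set (sig_img (fst x) (snd x) j)" by blast
    have "j \<in> {1..n}" using j(1) b by (auto simp: FG_def)
    then show "Suc 0 \<le> fst l \<and> fst l \<le> n" using j(2) fst_sig[of "fst x" "snd x" j] x by auto
  qed
qed

lemma fmul_FG: "x \<in> FG n \<Longrightarrow> y \<in> FG n \<Longrightarrow> fmul x y \<in> FG n"
  using set_reduce by (fastforce simp: FG_def fmul_def)

lemma finv_FG: "x \<in> FG n \<Longrightarrow> finv x \<in> FG n"
proof -
  assume x: "x \<in> FG n"
  then have "reduced (finv x)" by (simp add: FG_def reduced_finv)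
  moreover have "fst l \<in> {1..n}" if "l \<in> set (finv x)" for l
  proof -
    have "fst l \<in> fst ` set (finv x)" using that by blast
    then have "fst l \<in> fst ` set x" by (simp only: set_finv)
    then show ?thesis using x by (auto simp: FG_def)
  qed
  ultimately show ?thesis by (simp add: FG_def)
qed

lemma Nil_FG: "[] \<in> FG n" by (simp add: FG_def)

lemma gen_FG: "k \<in> {1..n} \<Longrightarrow> gen k \<in> FG n" by (simp add: FG_def gen_def)

lemma conj_conj: "fmul (fmul u (fmul (fmul v g) (finv v))) (finv u) = fmul (fmul (fmul u v) g) (finv (fmul u v))"
  by (simp add: fmul_assoc finv_fmul)

lemma Rset_conj: "r \<in> Rset n \<Longrightarrow> u \<in> FG n \<Longrightarrow> fmul (fmul u r) (finv u) \<in> Rset n"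
proof -
  assume r: "r \<in> Rset n" and u: "u \<in> FG n"
  from r obtain v k where v: "r = fmul (fmul v (gen k)) (finv v)" "v \<in> FG n" "k \<in> {1..n}"
    by (auto simp: Rset_def)
  have "fmul (fmul u r) (finv u) = fmul (fmul (fmul u v) (gen k)) (finv (fmul u v))"
    using v by (simp add: conj_conj)
  then show ?thesis unfolding Rset_def using v u fmul_FG by blast
qed

lemma gen_Rset: "k \<in> {1..n} \<Longrightarrow> gen k \<in> Rset n"
proof -
  assume k: "k \<in> {1..n}"
  have "gen k = fmul (fmul [] (gen k)) (finv [])" by (simp add: fmul_def gen_def reduce_Cons)
  then show ?thesis unfolding Rset_def using k Nil_FG by blast
qed

lemma sig_Rset: "i \<in> {1..<n} \<Longrightarrow> j \<in> {1..n} \<Longrightarrow> sig_img i e j \<in> Rset n"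
proof -
  assume i: "i \<in> {1..<n}" and j: "j \<in> {1..n}"
  have a: "[(i+1, True), (i, False), (i+1, False)] \<in> Rset n"
  proof -
    have "[(i+1, True), (i, False), (i+1, False)] = fmul (fmul [(i+1, True)] (gen i)) (finv [(i+1, True)])"
      by (simp add: fmul_def gen_def finv_alt linv_def reduce_Cons)
    moreover have "[(i+1, True)] \<in> FG n" using i by (simp add: FG_def)
    ultimately show ?thesis unfolding Rset_def using i by force
  qed
  have b: "[(i, False), (i+1, False), (i, True)] \<in> Rset n"
  proof -
    have "[(i, False), (i+1, False), (i, True)] = fmul (fmul [(i, False)] (gen (i+1))) (finv [(i, False)])"
      by (simp add: fmul_def gen_def finv_alt linv_def reduce_Cons)
    moreover have "[(i, False)] \<in> FG n" using i by (simp add: FG_def)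
    ultimately show ?thesis unfolding Rset_def using i by force
  qed
  show ?thesis using a b i j by (auto simp: sig_img_def intro!: gen_Rset)
qed

lemma reduced_sig: "reduced (sig_img i e j)"
  by (auto simp: sig_img_def gen_def linv_def)

lemma hom_gen_single: "hom_ext \<phi> (gen k) = reduce (\<phi> k)"
  by (simp add: gen_def hom_ext_Cons phi'_def fmul_def)

lemma hom_Rset: "i \<in> {1..<n} \<Longrightarrow> r \<in> Rset n \<Longrightarrow> hom_ext (sig_img i e) r \<in> Rset n"
proof -
  assume i: "i \<in> {1..<n}" and r: "r \<in> Rset n"
  from r obtain v k where v: "r = fmul (fmul v (gen k)) (finv v)" "v \<in> FG n" "k \<in> {1..n}"
    by (auto simp: Rset_def)
  have "hom_ext (sig_img i e) r = fmul (fmul (hom_ext (sig_img i e) v) (sig_img i e k)) (finv (hom_ext (sig_img i e) v))"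
    using v by (simp add: hom_fmul hom_finv hom_gen_single reduce_reduced reduced_sig)
  also have "\<dots> = fmul (fmul (hom_ext (sig_img i e) v) (fmul (fmul [] (sig_img i e k)) (finv [])))
      (finv (hom_ext (sig_img i e) v))"
    by (simp add: fmul_Nil_left fmul_Nil_right reduce_reduced reduced_sig)
  finally have eq: "hom_ext (sig_img i e) r = \<dots>" .
  have "hom_ext (sig_img i e) v \<in> FG n"
    using ba_FG[of "[(i, e)]" n v] i v by (simp add: braid_words_def ba_Cons)
  moreover have "fmul (fmul [] (sig_img i e k)) (finv []) \<in> Rset n"
    using Rset_conj[OF sig_Rset[OF i v(3)] Nil_FG] by simp
  ultimately show ?thesis
    using eq Rset_conj by (metis fmul_assoc)
qed


lemma ba_Rset: "t \<in> braid_words n \<Longrightarrow> r \<in> Rset n \<Longrightarrow> braid_act t r \<in> Rset n"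
  by (induction t) (auto simp: ba_Cons braid_words_def intro!: hom_Rset)

lemma ba_S: "t \<in> braid_words n \<Longrightarrow> r \<in> Rset n \<union> finv ` Rset n \<Longrightarrow> braid_act t r \<in> Rset n \<union> finv ` Rset n"
  by (auto simp: ba_finv ba_Rset)

lemma lenR_exists: "a \<in> FG n \<Longrightarrow> \<exists>xs. set xs \<subseteq> Rset n \<union> finv ` Rset n \<and> fprod xs = a"
proof -
  assume a: "a \<in> FG n"
  have "set (map (\<lambda>l. [l]) a) \<subseteq> Rset n \<union> finv ` Rset n"
  proof
    fix w assume "w \<in> set (map (\<lambda>l. [l]) a)"
    then obtain l where l: "l \<in> set a" "w = [l]" by auto
    have k: "fst l \<in> {1..n}" using a l by (auto simp: FG_def)
    show "w \<in> Rset n \<union> finv ` Rset n"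
    proof (cases "snd l")
      case True
      then have "w = finv (gen (fst l))" using l by (cases l) (simp add: finv_alt gen_def linv_def)
      then show ?thesis using gen_Rset[OF k] by blast
    next
      case False
      then have "w = gen (fst l)" using l by (cases l) (simp add: gen_def)
      then show ?thesis using gen_Rset[OF k] by blast
    qed
  qed
  moreover have "fprod (map (\<lambda>l. [l]) a) = a"
  proof -
    have "concat (map (\<lambda>l. [l]) a) = a" by (induction a) auto
    then show ?thesis using a by (simp add: fprod_eq FG_def reduce_reduced)
  qed
  ultimately show ?thesis by blast
qed

lemma lenR_le: "t \<in> braid_words n \<Longrightarrow> a \<in> FG n \<Longrightarrow> lenR n (braid_act t a) \<le> lenR n a"
proof -
  assume t: "t \<in> braid_words n" and a: "a \<in> FG n"
  let ?P = "\<lambda>b k. \<exists>xs. length xs = k \<and> set xs \<subseteq> Rset n \<union> finv ` Rset n \<and> fprod xs = b"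
  from lenR_exists[OF a] have "\<exists>k. ?P a k" by blast
  then have "?P a (lenR n a)" unfolding lenR_def by (rule LeastI_ex)
  then obtain xs where xs: "length xs = lenR n a" "set xs \<subseteq> Rset n \<union> finv ` Rset n" "fprod xs = a"
    by blast
  have "?P (braid_act t a) (lenR n a)"
    using xs ba_S[OF t] by (intro exI[of _ "map (braid_act t) xs"]) (auto simp: ba_fprod)
  then show ?thesis unfolding lenR_def by (rule Least_le)
qed

lemma lenR_eq: "t \<in> braid_words n \<Longrightarrow> a \<in> FG n \<Longrightarrow> lenR n (braid_act t a) = lenR n a"
proof -
  assume t: "t \<in> braid_words n" and a: "a \<in> FG n"
  have "lenR n (braid_act (binv t) (braid_act t a)) \<le> lenR n (braid_act t a)"
    by (rule lenR_le[OF binv_words[OF t] ba_FG[OF t a]])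
  moreover have "braid_act (binv t) (braid_act t a) = a" using a by (simp add: FG_def ba_inv)
  ultimately show ?thesis using lenR_le[OF t a] by simp
qed

lemma concat_gen: "concat (map gen xs) = map (\<lambda>j. (j, False)) xs"
  by (induction xs) (simp_all add: gen_def)

lemma reduced_pos: "reduced (map (\<lambda>j. (j, False)) xs)"
proof (induction xs)
  case Nil then show ?case by simp
next
  case (Cons x xs) then show ?case by (cases xs) (simp_all add: linv_def)
qed

lemma gelt_eq: "gelt n = map (\<lambda>j. (j, False)) [1..<n+1]"
  by (simp add: gelt_def fprod_eq concat_gen reduce_reduced reduced_pos)

lemma hom_gelt: "i \<in> {1..<n} \<Longrightarrow> hom_ext (sig_img i e) (gelt n) = gelt n"
proof -
  assume i: "i \<in> {1..<n}"
  let ?\<phi> = "sig_img i e"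
  have L: "[1..<n+1] = [1..<i] @ [i, i+1] @ [i+2..<n+1]"
  proof -
    have k: "n+1 = i + (n+1-i)" using i by simp
    have "[1..<i + (n+1-i)] = [1..<i] @ [i..<i + (n+1-i)]" using i by (intro upt_add_eq_append) simp
    then have "[1..<n+1] = [1..<i] @ [i..<n+1]" using k by metis
    moreover have "[i..<n+1] = i # (i+1) # [i+2..<n+1]" using i by (simp add: upt_conv_Cons)
    ultimately show ?thesis by simp
  qed
  have phi: "map (phi' ?\<phi>) (map (\<lambda>j. (j, False)) xs) = map ?\<phi> xs" for xs
    by (simp add: phi'_def)
  have A: "map ?\<phi> [1..<i] = map gen [1..<i]"
    by (rule map_cong) (auto simp: sig_img_def)
  have B: "map ?\<phi> [i+2..<n+1] = map gen [i+2..<n+1]"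
    by (rule map_cong) (auto simp: sig_img_def)
  have M: "reduce (?\<phi> i @ ?\<phi> (i+1)) = concat (map gen [i, i+1])"
    by (cases e) (simp_all add: sig_img_def gen_def reduce_Cons linv_def)
  have "hom_ext ?\<phi> (gelt n) = reduce (concat (map gen [1..<i]) @ (?\<phi> i @ ?\<phi> (i+1)) @ concat (map gen [i+2..<n+1]))"
    unfolding gelt_eq hom_ext_eq phi L
    by (simp only: A B map_append concat_append list.map concat.simps append_assoc append_Nil2)
  also have "\<dots> = reduce (concat (map gen [1..<i]) @ concat (map gen [i, i+1]) @ concat (map gen [i+2..<n+1]))"
    using reduce_append_mid[of "concat (map gen [1..<i])" "?\<phi> i @ ?\<phi> (i+1)" "concat (map gen [i+2..<n+1])"]
    by (simp only: M)
  also have "\<dots> = reduce (concat (map gen [1..<n+1]))" unfolding L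
    by (simp only: map_append concat_append append_assoc)
  also have "\<dots> = gelt n" by (simp add: gelt_def fprod_eq)
  finally show ?thesis .
qed

lemma ba_gelt: "t \<in> braid_words n \<Longrightarrow> braid_act t (gelt n) = gelt n"
  by (induction t) (auto simp: ba_Cons braid_words_def hom_gelt)

lemma gelt_FG: "gelt n \<in> FG n"
  by (auto simp: gelt_eq FG_def reduced_pos)


lemma leR_ba: "t \<in> braid_words n \<Longrightarrow> a \<in> FG n \<Longrightarrow> b \<in> FG n \<Longrightarrow>
  leR n (braid_act t a) (braid_act t b) = leR n a b"
proof -
  assume t: "t \<in> braid_words n" and a: "a \<in> FG n" and b: "b \<in> FG n"
  have ab: "fmul (finv a) b \<in> FG n" using a b by (intro fmul_FG finv_FG)
  have "fmul (finv (braid_act t a)) (braid_act t b) = braid_act t (fmul (finv a) b)"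
    by (simp add: ba_fmul ba_finv)
  then show ?thesis unfolding leR_def using lenR_eq[OF t a] lenR_eq[OF t b] lenR_eq[OF t ab] by simp
qed

lemma ba_interval: "t \<in> braid_words n \<Longrightarrow> a \<in> intervalR n (gelt n) \<Longrightarrow> braid_act t a \<in> intervalR n (gelt n)"
  using ba_FG leR_ba[of t n a "gelt n"] gelt_FG ba_gelt by (auto simp: intervalR_def)

theorem corollary4p3:
  fixes n :: nat and \<tau> :: "(nat \<times> bool) list"
  assumes "\<tau> \<in> braid_words n"
  shows "bij_betw (braid_act \<tau>) (intervalR n (gelt n)) (intervalR n (gelt n))
    \<and> (\<forall>a \<in> intervalR n (gelt n). \<forall>b \<in> intervalR n (gelt n).
          leR n a b \<longleftrightarrow> leR n (braid_act \<tau> a) (braid_act \<tau> b))"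
proof
  have t': "binv \<tau> \<in> braid_words n" using assms by (rule binv_words)
  show "bij_betw (braid_act \<tau>) (intervalR n (gelt n)) (intervalR n (gelt n))"
  proof (rule bij_betw_byWitness[where f' = "braid_act (binv \<tau>)"])
    show "\<forall>a\<in>intervalR n (gelt n). braid_act (binv \<tau>) (braid_act \<tau> a) = a"
      by (auto simp: intervalR_def FG_def ba_inv)
    show "\<forall>a\<in>intervalR n (gelt n). braid_act \<tau> (braid_act (binv \<tau>) a) = a"
      by (auto simp: intervalR_def FG_def ba_inv')
    show "braid_act \<tau> ` intervalR n (gelt n) \<subseteq> intervalR n (gelt n)"
      using ba_interval[OF assms] by blast
    show "braid_act (binv \<tau>) ` intervalR n (gelt n) \<subseteq> intervalR n (gelt n)"
      using ba_interval[OF t'] by blast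
  qed
  show "\<forall>a \<in> intervalR n (gelt n). \<forall>b \<in> intervalR n (gelt n).
          leR n a b \<longleftrightarrow> leR n (braid_act \<tau> a) (braid_act \<tau> b)"
    using leR_ba[OF assms] by (auto simp: intervalR_def)
qed

end
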